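(* There exists a constant $C>0$ such that for all $\beta\in\mathbb R$ and all $N\in\mathbb N$, $$\sup_{x\in\Lambda_N}\int_0^\infty\mathsf P^N\big(X^{N,x}_t\in\Lambda_N\big)\,dt\le C\max\{1,N^{\beta-1}\}.$$
   Context: Fix $\alpha,\alpha_L,\alpha_R>0$. Let $\Lambda_N=\{1,\dots,N-1\}$, $\widehat\Lambda_N=\{0,\dots,N\}$. For $\beta\in\mathbb R$, $\{X^{N,x}_t:t\ge0\}$ (law $\mathsf P^N$) is the continuous-time random walk on $\widehat\Lambda_N$ started at $x$ with generator $A^Nf(x)=\mathbf 1_{\{x\in\Lambda_N\}}N^2\sum_{y\in\Lambda_N,|y-x|=1}\alpha(f(y)-f(x))+\mathbf 1_{\{x=1\}}N^{2-\beta}\alpha_L(f(0)-f(1))+\mathbf 1_{\{x=N-1\}}N^{2-\beta}\alpha_R(f(N)-f(N-1))$, i.e. it jumps between nearest neighbours of $\Lambda_N$ at rate $N^2\alpha$, jumps from $1$ to $0$ at rate $N^{2-\beta}\alpha_L$ and from $N-1$ to $N$ at rate $N^{2-\beta}\alpha_R$, and is absorbed at $0$ and $N$. The constant $C$ may depend on $\alpha,\alpha_L,\alpha_R$ but not on $\beta$, $N$, $x$. *)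

theory Defs
  imports "HOL-Analysis.Analysis"
begin

definition Lam :: "nat \<Rightarrow> nat set" where
  "Lam N = {1..<N}"

definition Lamhat :: "nat \<Rightarrow> nat set" where
  "Lamhat N = {0..N}"

definition rate :: "real \<Rightarrow> real \<Rightarrow> real \<Rightarrow> real \<Rightarrow> nat \<Rightarrow> nat \<Rightarrow> nat \<Rightarrow> real" where
  "rate \<alpha> \<alpha>L \<alpha>R \<beta> N x y =
     (if x \<in> Lam N \<and> y \<in> Lam N \<and> (y = x + 1 \<or> x = y + 1) then real N ^ 2 * \<alpha> else 0)
   + (if x = 1 \<and> y = 0 then real N powr (2 - \<beta>) * \<alpha>L else 0)
   + (if x = N - 1 \<and> y = N \<and> N \<ge> 1 then real N powr (2 - \<beta>) * \<alpha>R else 0)"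

definition Qgen :: "real \<Rightarrow> real \<Rightarrow> real \<Rightarrow> real \<Rightarrow> nat \<Rightarrow> nat \<Rightarrow> nat \<Rightarrow> real" where
  "Qgen \<alpha> \<alpha>L \<alpha>R \<beta> N x y =
     (if x = y then - (\<Sum>z\<in>Lamhat N - {x}. rate \<alpha> \<alpha>L \<alpha>R \<beta> N x z)
      else rate \<alpha> \<alpha>L \<alpha>R \<beta> N x y)"

fun Qpow :: "real \<Rightarrow> real \<Rightarrow> real \<Rightarrow> real \<Rightarrow> nat \<Rightarrow> nat \<Rightarrow> nat \<Rightarrow> nat \<Rightarrow> real" where
  "Qpow \<alpha> \<alpha>L \<alpha>R \<beta> N 0 x y = (if x = y then 1 else 0)"
| "Qpow \<alpha> \<alpha>L \<alpha>R \<beta> N (Suc k) x y =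
     (\<Sum>z\<in>Lamhat N. Qgen \<alpha> \<alpha>L \<alpha>R \<beta> N x z * Qpow \<alpha> \<alpha>L \<alpha>R \<beta> N k z y)"

text \<open>Transition probabilities P^N(X^{N,x}_t = y) = (exp (t A^N)) x y.\<close>
definition trans_prob :: "real \<Rightarrow> real \<Rightarrow> real \<Rightarrow> real \<Rightarrow> nat \<Rightarrow> real \<Rightarrow> nat \<Rightarrow> nat \<Rightarrow> real" where
  "trans_prob \<alpha> \<alpha>L \<alpha>R \<beta> N t x y =
     (\<Sum>k. t ^ k / fact k * Qpow \<alpha> \<alpha>L \<alpha>R \<beta> N k x y)"

definition surv_prob :: "real \<Rightarrow> real \<Rightarrow> real \<Rightarrow> real \<Rightarrow> nat \<Rightarrow> nat \<Rightarrow> real \<Rightarrow> real" where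
  "surv_prob \<alpha> \<alpha>L \<alpha>R \<beta> N x t = (\<Sum>y\<in>Lam N. trans_prob \<alpha> \<alpha>L \<alpha>R \<beta> N t x y)"

end

theory Submission
  imports Defs "HOL-Probability.Probability"
begin

lemma pascal_shift:
  fixes F :: "nat \<Rightarrow> real" and c :: real
  shows "(\<Sum>i\<le>k. of_nat (k choose i) * c^(k-i) * (F (Suc i) + c * F i))
       = (\<Sum>i\<le>Suc k. of_nat (Suc k choose i) * c^(Suc k - i) * F i)"
proof -
  define G where "G i = of_nat (k choose i) * c^(Suc k - i) * F i" for i
  have e1: "(\<Sum>i\<le>Suc k. G i) = G 0 + (\<Sum>i\<le>k. G (Suc i))"
    by (rule sum.atMost_Suc_shift)
  have e2: "(\<Sum>i\<le>Suc k. G i) = (\<Sum>i\<le>k. G i)"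
    by (simp add: G_def)
  have e3: "(\<Sum>i\<le>k. G i) = (\<Sum>i\<le>k. of_nat (k choose i) * c^(k-i) * (c * F i))"
    by (rule sum.cong) (auto simp: G_def Suc_diff_le)
  have "(\<Sum>i\<le>Suc k. of_nat (Suc k choose i) * c^(Suc k - i) * F i)
      = c^(Suc k) * F 0 + (\<Sum>i\<le>k. of_nat (Suc k choose Suc i) * c^(k - i) * F (Suc i))"
    by (subst sum.atMost_Suc_shift) simp
  also have "\<dots> = G 0 + (\<Sum>i\<le>k. G (Suc i)) + (\<Sum>i\<le>k. of_nat (k choose i) * c^(k-i) * F (Suc i))"
    by (simp add: G_def sum.distrib algebra_simps)
  also have "\<dots> = (\<Sum>i\<le>k. of_nat (k choose i) * c^(k-i) * (F (Suc i) + c * F i))"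
    using e1 e2 e3 by (simp add: sum.distrib algebra_simps)
  finally show ?thesis by simp
qed

context
  fixes \<alpha> \<alpha>L \<alpha>R \<beta> :: real and N :: nat
  assumes pa: "\<alpha> > 0" and pL: "\<alpha>L > 0" and pR: "\<alpha>R > 0"
begin

definition "rt x y = rate \<alpha> \<alpha>L \<alpha>R \<beta> N x y"
definition "qq = 1 + (\<Sum>x\<in>Lamhat N. \<Sum>z\<in>Lamhat N. rt x z)"
definition "RR x z = Qgen \<alpha> \<alpha>L \<alpha>R \<beta> N x z + (if x = z then qq else 0)"

fun Rpow :: "nat \<Rightarrow> nat \<Rightarrow> nat \<Rightarrow> real" where
  "Rpow 0 x y = (if x = y then 1 else 0)"
| "Rpow (Suc k) x y = (\<Sum>z\<in>Lamhat N. RR x z * Rpow k z y)"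

lemma rt_nonneg: "rt x y \<ge> 0"
  using pa pL pR unfolding rt_def rate_def by auto

lemma rt_diag: "rt x x = 0"
  unfolding rt_def rate_def by auto

lemma qq_pos: "qq > 0"
proof -
  have "0 \<le> (\<Sum>x\<in>Lamhat N. \<Sum>z\<in>Lamhat N. rt x z)"
    by (intro sum_nonneg rt_nonneg)
  then show ?thesis unfolding qq_def by linarith
qed

lemma RR_nonneg:
  assumes "x \<in> Lamhat N" "z \<in> Lamhat N"
  shows "RR x z \<ge> 0"
proof (cases "x = z")
  case True
  have fin: "finite (Lamhat N)" by (simp add: Lamhat_def)
  have "(\<Sum>w\<in>Lamhat N - {x}. rt x w) \<le> (\<Sum>w\<in>Lamhat N. rt x w)"
    by (rule sum_mono2) (auto simp: fin rt_nonneg)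
  also have "\<dots> \<le> (\<Sum>x\<in>Lamhat N. \<Sum>w\<in>Lamhat N. rt x w)"
    using member_le_sum[of x "Lamhat N" "\<lambda>x. \<Sum>w\<in>Lamhat N. rt x w"] assms fin
    by (simp add: sum_nonneg rt_nonneg)
  finally show ?thesis using True unfolding RR_def Qgen_def qq_def rt_def by simp
next
  case False
  then show ?thesis using rt_nonneg[of x z] unfolding RR_def Qgen_def rt_def by simp
qed

lemma Rpow_nonneg: "x \<in> Lamhat N \<Longrightarrow> Rpow j x y \<ge> 0"
proof (induction j arbitrary: x)
  case 0 then show ?case by simp
next
  case (Suc j)
  then show ?case by (auto intro!: sum_nonneg mult_nonneg_nonneg RR_nonneg)
qed

definition "BB = (\<Sum>x\<in>Lamhat N. \<Sum>z\<in>Lamhat N. RR x z)"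

lemma BB_nonneg: "BB \<ge> 0"
  unfolding BB_def by (intro sum_nonneg RR_nonneg)

lemma Rpow_bound: "x \<in> Lamhat N \<Longrightarrow> Rpow j x y \<le> BB ^ j"
proof (induction j arbitrary: x)
  case 0 then show ?case by simp
next
  case (Suc j)
  have fin: "finite (Lamhat N)" by (simp add: Lamhat_def)
  have "Rpow (Suc j) x y \<le> (\<Sum>z\<in>Lamhat N. RR x z * BB ^ j)"
    using Suc by (auto intro!: sum_mono mult_left_mono RR_nonneg)
  also have "\<dots> = (\<Sum>z\<in>Lamhat N. RR x z) * BB ^ j" by (simp add: sum_distrib_right)
  also have "\<dots> \<le> BB * BB ^ j"
  proof (rule mult_right_mono)
    show "(\<Sum>z\<in>Lamhat N. RR x z) \<le> BB"
      unfolding BB_def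
      using member_le_sum[of x "Lamhat N" "\<lambda>x. \<Sum>w\<in>Lamhat N. RR x w"] Suc.prems fin
      by (simp add: sum_nonneg RR_nonneg)
  qed (simp add: BB_nonneg)
  finally show ?case by simp
qed

lemma Q_Rpow: "x \<in> Lamhat N \<Longrightarrow>
  (\<Sum>z\<in>Lamhat N. Qgen \<alpha> \<alpha>L \<alpha>R \<beta> N x z * Rpow i z y) = Rpow (Suc i) x y - qq * Rpow i x y"
proof -
  assume x: "x \<in> Lamhat N"
  have fin: "finite (Lamhat N)" by (simp add: Lamhat_def)
  have "(\<Sum>z\<in>Lamhat N. Qgen \<alpha> \<alpha>L \<alpha>R \<beta> N x z * Rpow i z y)
     = (\<Sum>z\<in>Lamhat N. RR x z * Rpow i z y - (if x = z then qq * Rpow i z y else 0))"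
    by (rule sum.cong) (auto simp: RR_def algebra_simps)
  also have "\<dots> = Rpow (Suc i) x y - qq * Rpow i x y"
    using x fin by (simp add: sum_subtractf)
  finally show ?thesis .
qed

lemma Qpow_binom: "x \<in> Lamhat N \<Longrightarrow>
  Qpow \<alpha> \<alpha>L \<alpha>R \<beta> N k x y = (\<Sum>i\<le>k. of_nat (k choose i) * (-qq)^(k-i) * Rpow i x y)"
proof (induction k arbitrary: x)
  case 0 then show ?case by simp
next
  case (Suc k)
  have "Qpow \<alpha> \<alpha>L \<alpha>R \<beta> N (Suc k) x y
     = (\<Sum>z\<in>Lamhat N. Qgen \<alpha> \<alpha>L \<alpha>R \<beta> N x z * (\<Sum>i\<le>k. of_nat (k choose i) * (-qq)^(k-i) * Rpow i z y))"
    using Suc.IH by simp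
  also have "\<dots> = (\<Sum>i\<le>k. of_nat (k choose i) * (-qq)^(k-i) * (\<Sum>z\<in>Lamhat N. Qgen \<alpha> \<alpha>L \<alpha>R \<beta> N x z * Rpow i z y))"
    by (simp add: sum_distrib_left sum_distrib_right algebra_simps sum.swap[of _ "Lamhat N"])
  also have "\<dots> = (\<Sum>i\<le>k. of_nat (k choose i) * (-qq)^(k-i) * (Rpow (Suc i) x y + (-qq) * Rpow i x y))"
    using Suc.prems by (simp add: Q_Rpow)
  also have "\<dots> = (\<Sum>i\<le>Suc k. of_nat (Suc k choose i) * (-qq)^(Suc k - i) * Rpow i x y)"
    by (rule pascal_shift)
  finally show ?case .
qed

end

context
  fixes \<alpha> \<alpha>L \<alpha>R \<beta> :: real and N :: nat
  assumes pa: "\<alpha> > 0" and pL: "\<alpha>L > 0" and pR: "\<alpha>R > 0"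
begin

lemma summable_Rser:
  assumes x: "x \<in> Lamhat N"
  shows "summable (\<lambda>j. norm (t^j / fact j * Rpow \<alpha> \<alpha>L \<alpha>R \<beta> N j x y))"
proof (rule summable_comparison_test')
  show "summable (\<lambda>n. inverse (fact n) * (\<bar>t\<bar> * BB \<alpha> \<alpha>L \<alpha>R \<beta> N)^n)" by (rule summable_exp)
  fix n :: nat
  have "norm (norm (t^n / fact n * Rpow \<alpha> \<alpha>L \<alpha>R \<beta> N n x y)) = \<bar>t\<bar>^n / fact n * Rpow \<alpha> \<alpha>L \<alpha>R \<beta> N n x y"
    using Rpow_nonneg[OF pa pL pR x] by (simp add: abs_mult power_abs)
  also have "\<dots> \<le> \<bar>t\<bar>^n / fact n * BB \<alpha> \<alpha>L \<alpha>R \<beta> N ^ n"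
    by (rule mult_left_mono) (auto intro: Rpow_bound[OF pa pL pR x])
  also have "\<dots> = inverse (fact n) * (\<bar>t\<bar> * BB \<alpha> \<alpha>L \<alpha>R \<beta> N)^n"
    by (simp add: power_mult_distrib field_simps)
  finally show "norm (norm (t^n / fact n * Rpow \<alpha> \<alpha>L \<alpha>R \<beta> N n x y)) \<le> inverse (fact n) * (\<bar>t\<bar> * BB \<alpha> \<alpha>L \<alpha>R \<beta> N)^n" .
qed

lemma trans_prob_eq:
  assumes x: "x \<in> Lamhat N"
  shows "trans_prob \<alpha> \<alpha>L \<alpha>R \<beta> N t x y
       = exp (- qq \<alpha> \<alpha>L \<alpha>R \<beta> N * t) * (\<Sum>j. t^j / fact j * Rpow \<alpha> \<alpha>L \<alpha>R \<beta> N j x y)"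
proof -
  define q where "q = qq \<alpha> \<alpha>L \<alpha>R \<beta> N"
  define a where "a j = t^j / fact j * Rpow \<alpha> \<alpha>L \<alpha>R \<beta> N j x y" for j
  define b where "b m = (- q * t)^m /\<^sub>R fact m" for m
  have sa: "summable (\<lambda>k. norm (a k))" unfolding a_def by (rule summable_Rser[OF x])
  have sb: "summable (\<lambda>k. norm (b k))"
  proof -
    have "summable (\<lambda>n. inverse (fact n) * \<bar>q * t\<bar>^n)" by (rule summable_exp)
    moreover have "norm (b k) = inverse (fact k) * \<bar>q * t\<bar>^k" for k
      by (simp add: b_def power_abs abs_mult)
    ultimately show ?thesis by simp
  qed
  have bsum: "(\<Sum>k. b k) = exp (- q * t)"
    unfolding b_def by (rule sums_unique[symmetric]) (rule exp_converges)
  have trm: "(\<Sum>i\<le>k. a i * b (k - i)) = t^k / fact k * Qpow \<alpha> \<alpha>L \<alpha>R \<beta> N k x y" for k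
  proof -
    have "(\<Sum>i\<le>k. a i * b (k - i)) = (\<Sum>i\<le>k. t^k / fact k * (of_nat (k choose i) * (-q)^(k-i) * Rpow \<alpha> \<alpha>L \<alpha>R \<beta> N i x y))"
    proof (rule sum.cong)
      fix i assume "i \<in> {..k}"
      then have ik: "i \<le> k" by simp
      have tk: "t^k = t^i * t^(k-i)" using ik by (simp add: power_add[symmetric])
      have ck: "real (k choose i) = fact k / (fact i * fact (k - i))"
        using ik by (simp add: binomial_fact)
      show "a i * b (k - i) = t^k / fact k * (of_nat (k choose i) * (-q)^(k-i) * Rpow \<alpha> \<alpha>L \<alpha>R \<beta> N i x y)"
        unfolding a_def b_def tk ck by (simp add: power_mult_distrib[symmetric] field_simps)
    qed simp
    also have "\<dots> = t^k / fact k * Qpow \<alpha> \<alpha>L \<alpha>R \<beta> N k x y"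
      by (simp add: Qpow_binom[OF pa pL pR x] sum_distrib_left q_def)
    finally show ?thesis .
  qed
  have "(\<Sum>k. a k) * (\<Sum>k. b k) = (\<Sum>k. \<Sum>i\<le>k. a i * b (k - i))"
    by (rule Cauchy_product[OF sa sb])
  then show ?thesis
    unfolding trans_prob_def trm bsum by (simp add: a_def q_def mult.commute)
qed

end

context
  fixes \<alpha> \<alpha>L \<alpha>R \<beta> :: real and N :: nat
  assumes pa: "\<alpha> > 0" and pL: "\<alpha>L > 0" and pR: "\<alpha>R > 0"
begin

lemmas rtd = rt_diag[OF pa pL pR]
lemmas Rps = Rpow.simps[OF pa pL pR]
lemmas rtdef = rt_def[OF pa pL pR]
lemmas RRdef = RR_def[OF pa pL pR]
lemmas qqdef = qq_def[OF pa pL pR]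

lemma Rpow_right:
  assumes "x \<in> Lamhat N" "y \<in> Lamhat N"
  shows "Rpow \<alpha> \<alpha>L \<alpha>R \<beta> N (Suc j) x y = (\<Sum>z\<in>Lamhat N. Rpow \<alpha> \<alpha>L \<alpha>R \<beta> N j x z * RR \<alpha> \<alpha>L \<alpha>R \<beta> N z y)"
  using assms(1)
proof (induction j arbitrary: x)
  case 0
  have fin: "finite (Lamhat N)" by (simp add: Lamhat_def)
  show ?case using 0 assms(2) fin
  proof -
    have "(\<Sum>z\<in>Lamhat N. RR \<alpha> \<alpha>L \<alpha>R \<beta> N x z * (if z = y then 1 else 0)) = (\<Sum>z\<in>Lamhat N. if z = y then RR \<alpha> \<alpha>L \<alpha>R \<beta> N x z else 0)"
      by (rule sum.cong) auto
    moreover have "(\<Sum>z\<in>Lamhat N. (if x = z then 1 else 0) * RR \<alpha> \<alpha>L \<alpha>R \<beta> N z y) = (\<Sum>z\<in>Lamhat N. if x = z then RR \<alpha> \<alpha>L \<alpha>R \<beta> N z y else 0)"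
      by (rule sum.cong) auto
    ultimately show ?thesis using 0 assms(2) fin by (simp add: Rps)
  qed
next
  case (Suc j)
  have "Rpow \<alpha> \<alpha>L \<alpha>R \<beta> N (Suc (Suc j)) x y = (\<Sum>z\<in>Lamhat N. RR \<alpha> \<alpha>L \<alpha>R \<beta> N x z * Rpow \<alpha> \<alpha>L \<alpha>R \<beta> N (Suc j) z y)"
    by (rule Rps(2))
  also have "\<dots> = (\<Sum>z\<in>Lamhat N. RR \<alpha> \<alpha>L \<alpha>R \<beta> N x z * (\<Sum>w\<in>Lamhat N. Rpow \<alpha> \<alpha>L \<alpha>R \<beta> N j z w * RR \<alpha> \<alpha>L \<alpha>R \<beta> N w y))"
    by (intro sum.cong refl) (simp add: Suc.IH)
  also have "\<dots> = (\<Sum>w\<in>Lamhat N. (\<Sum>z\<in>Lamhat N. RR \<alpha> \<alpha>L \<alpha>R \<beta> N x z * Rpow \<alpha> \<alpha>L \<alpha>R \<beta> N j z w) * RR \<alpha> \<alpha>L \<alpha>R \<beta> N w y)"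
    unfolding sum_distrib_left sum_distrib_right mult.assoc by (rule sum.swap)
  also have "\<dots> = (\<Sum>w\<in>Lamhat N. Rpow \<alpha> \<alpha>L \<alpha>R \<beta> N (Suc j) x w * RR \<alpha> \<alpha>L \<alpha>R \<beta> N w y)"
    by (simp only: Rps(2))
  finally show ?case .
qed

lemma Qgen_alt:
  assumes "z \<in> Lamhat N"
  shows "Qgen \<alpha> \<alpha>L \<alpha>R \<beta> N z y = rt \<alpha> \<alpha>L \<alpha>R \<beta> N z y - (if z = y then (\<Sum>w\<in>Lamhat N. rt \<alpha> \<alpha>L \<alpha>R \<beta> N z w) else 0)"
proof -
  have fin: "finite (Lamhat N)" by (simp add: Lamhat_def)
  have "(\<Sum>w\<in>Lamhat N - {z}. rt \<alpha> \<alpha>L \<alpha>R \<beta> N z w) = (\<Sum>w\<in>Lamhat N. rt \<alpha> \<alpha>L \<alpha>R \<beta> N z w)"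
    using assms fin by (simp add: sum_diff1 rtd)
  then show ?thesis using rtd[of \<beta> N z] by (cases "z = y") (simp_all add: Qgen_def rtdef)
qed

lemma RR_diag: "z \<in> Lamhat N \<Longrightarrow> RR \<alpha> \<alpha>L \<alpha>R \<beta> N z z = qq \<alpha> \<alpha>L \<alpha>R \<beta> N - (\<Sum>w\<in>Lamhat N. rt \<alpha> \<alpha>L \<alpha>R \<beta> N z w)"
  by (simp add: RRdef Qgen_alt rtd)

lemma RR_off: "z \<noteq> y \<Longrightarrow> RR \<alpha> \<alpha>L \<alpha>R \<beta> N z y = rt \<alpha> \<alpha>L \<alpha>R \<beta> N z y"
  by (simp add: RRdef Qgen_def rtdef)

lemma RR_h:
  assumes "z \<in> Lamhat N"
  shows "(\<Sum>y\<in>Lamhat N. RR \<alpha> \<alpha>L \<alpha>R \<beta> N z y * h y)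
       = (\<Sum>y\<in>Lamhat N. rt \<alpha> \<alpha>L \<alpha>R \<beta> N z y * (h y - h z)) + qq \<alpha> \<alpha>L \<alpha>R \<beta> N * h z"
proof -
  have fin: "finite (Lamhat N)" by (simp add: Lamhat_def)
  have "(\<Sum>y\<in>Lamhat N. RR \<alpha> \<alpha>L \<alpha>R \<beta> N z y * h y)
    = (\<Sum>y\<in>Lamhat N. rt \<alpha> \<alpha>L \<alpha>R \<beta> N z y * h y - (if z = y then (\<Sum>w\<in>Lamhat N. rt \<alpha> \<alpha>L \<alpha>R \<beta> N z w) * h y else 0)
          + (if z = y then qq \<alpha> \<alpha>L \<alpha>R \<beta> N * h y else 0))"
    by (rule sum.cong) (auto simp: RR_diag[OF assms] RR_off algebra_simps rtd)
  also have "\<dots> = (\<Sum>y\<in>Lamhat N. rt \<alpha> \<alpha>L \<alpha>R \<beta> N z y * h y) - (\<Sum>w\<in>Lamhat N. rt \<alpha> \<alpha>L \<alpha>R \<beta> N z w) * h z + qq \<alpha> \<alpha>L \<alpha>R \<beta> N * h z"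
    using assms fin by (simp add: sum.distrib sum_subtractf)
  also have "\<dots> = (\<Sum>y\<in>Lamhat N. rt \<alpha> \<alpha>L \<alpha>R \<beta> N z y * (h y - h z)) + qq \<alpha> \<alpha>L \<alpha>R \<beta> N * h z"
    by (simp add: algebra_simps sum_subtractf sum_distrib_right sum_distrib_left)
  finally show ?thesis .
qed

end

definition hh :: "real \<Rightarrow> real \<Rightarrow> real \<Rightarrow> real \<Rightarrow> nat \<Rightarrow> nat \<Rightarrow> real" where
  "hh \<alpha> \<alpha>L \<alpha>R \<beta> N x = (if x \<in> Lam N then real x * (real N - real x) / (2 * (real N ^ 2 * \<alpha>))
      + (real N - 1) / 2 * (1 / (real N powr (2 - \<beta>) * \<alpha>L) + 1 / (real N powr (2 - \<beta>) * \<alpha>R)) else 0)"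

lemma sum_delta_cond:
  fixes f :: "nat \<Rightarrow> real"
  assumes "finite A" "k \<in> A"
  shows "(\<Sum>y\<in>A. (if y = k \<and> P then v else 0) * f y) = (if P then v * f k else 0)"
proof -
  have "(\<Sum>y\<in>A. (if y = k \<and> P then v else 0) * f y) = (\<Sum>y\<in>A. if y = k then (if P then v * f y else 0) else 0)"
    by (rule sum.cong) auto
  also have "\<dots> = (if P then v * f k else 0)" using assms by simp
  finally show ?thesis .
qed

context
  fixes \<alpha> \<alpha>L \<alpha>R \<beta> :: real and N :: nat
  assumes pa: "\<alpha> > 0" and pL: "\<alpha>L > 0" and pR: "\<alpha>R > 0"
begin

lemmas rtdef' = rt_def[OF pa pL pR]

lemma rt_point:
  assumes z: "z \<in> Lam N"
  shows "rt \<alpha> \<alpha>L \<alpha>R \<beta> N z y =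
      (if y = z + 1 \<and> z + 1 < N then real N ^ 2 * \<alpha> else 0)
    + (if y = z - 1 \<and> z \<ge> 2 then real N ^ 2 * \<alpha> else 0)
    + (if y = 0 \<and> z = 1 then real N powr (2 - \<beta>) * \<alpha>L else 0)
    + (if y = N \<and> z = N - 1 then real N powr (2 - \<beta>) * \<alpha>R else 0)"
proof -
  have zz: "1 \<le> z" "z < N" using z by (auto simp: Lam_def)
  have c: "(z \<in> Lam N \<and> y \<in> Lam N \<and> (y = z + 1 \<or> z = y + 1)) \<longleftrightarrow>
           (y = z + 1 \<and> z + 1 < N) \<or> (y = z - 1 \<and> z \<ge> 2)"
    using zz by (auto simp: Lam_def)
  have d: "\<not> ((y = z + 1 \<and> z + 1 < N) \<and> (y = z - 1 \<and> z \<ge> 2))" by auto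
  show ?thesis unfolding rtdef' rate_def c using zz d by auto
qed

lemma row_expand:
  assumes z: "z \<in> Lam N"
  shows "(\<Sum>y\<in>Lamhat N. rt \<alpha> \<alpha>L \<alpha>R \<beta> N z y * f y)
    = (if z + 1 < N then real N ^ 2 * \<alpha> * f (z+1) else 0)
    + (if z \<ge> 2 then real N ^ 2 * \<alpha> * f (z-1) else 0)
    + (if z = 1 then real N powr (2 - \<beta>) * \<alpha>L * f 0 else 0)
    + (if z = N - 1 then real N powr (2 - \<beta>) * \<alpha>R * f N else 0)"
proof -
  have fin: "finite (Lamhat N)" by (simp add: Lamhat_def)
  have zz: "1 \<le> z" "z < N" using z by (auto simp: Lam_def)
  have m: "z + 1 \<in> Lamhat N" "z - 1 \<in> Lamhat N" "0 \<in> Lamhat N" "N \<in> Lamhat N"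
    using zz by (auto simp: Lamhat_def)
  show ?thesis
    unfolding rt_point[OF z] distrib_right sum.distrib
    by (simp only: sum_delta_cond[OF fin m(1)] sum_delta_cond[OF fin m(2)] sum_delta_cond[OF fin m(3)] sum_delta_cond[OF fin m(4)])
qed

end

context
  fixes \<alpha> \<alpha>L \<alpha>R \<beta> :: real and N :: nat
  assumes pa: "\<alpha> > 0" and pL: "\<alpha>L > 0" and pR: "\<alpha>R > 0"
begin

lemma gen_h:
  assumes z: "z \<in> Lam N"
  shows "(\<Sum>y\<in>Lamhat N. rt \<alpha> \<alpha>L \<alpha>R \<beta> N z y * (hh \<alpha> \<alpha>L \<alpha>R \<beta> N y - hh \<alpha> \<alpha>L \<alpha>R \<beta> N z)) \<le> -1"
proof -
  have zz: "1 \<le> z" "z < N" using z by (auto simp: Lam_def)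
  define n where "n = real N"
  define Z where "Z = real z"
  define a where "a = n^2 * \<alpha>"
  define b where "b = n powr (2 - \<beta>) * \<alpha>L"
  define c where "c = n powr (2 - \<beta>) * \<alpha>R"
  define D where "D = (n - 1) / 2 * (1 / b + 1 / c)"
  define G where "G u = u * (n - u) / (2 * a)" for u
  let ?h = "hh \<alpha> \<alpha>L \<alpha>R \<beta> N"
  have n2: "n \<ge> 2" using zz unfolding n_def by linarith
  have apos: "a > 0" unfolding a_def using n2 pa by simp
  have bpos: "b > 0" unfolding b_def using n2 pL by simp
  have cpos: "c > 0" unfolding c_def using n2 pR by simp
  have hin: "?h w = G (real w) + D" if "w \<in> Lam N" for w
    using that unfolding hh_def G_def D_def a_def b_def c_def n_def by simp
  have h0: "?h 0 = 0" "?h N = 0" by (auto simp: hh_def Lam_def)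
  have hz: "?h z = G Z + D" using hin[OF z] Z_def by simp
  have key: "a * (G (Z + 1) - G Z) + a * (G (Z - 1) - G Z) = -1"
    unfolding G_def using apos by (simp add: field_simps)
  have Dc: "c * D \<ge> (n - 1) / 2" "b * D \<ge> (n - 1) / 2"
  proof -
    have "c * D = (n - 1) / 2 * (c / b) + (n - 1) / 2" unfolding D_def using bpos cpos by (simp add: field_simps)
    moreover have "(n - 1) / 2 * (c / b) \<ge> 0" using n2 bpos cpos by simp
    ultimately show "c * D \<ge> (n - 1) / 2" by linarith
    have "b * D = (n - 1) / 2 * (b / c) + (n - 1) / 2" unfolding D_def using bpos cpos by (simp add: field_simps)
    moreover have "(n - 1) / 2 * (b / c) \<ge> 0" using n2 bpos cpos by simp
    ultimately show "b * D \<ge> (n - 1) / 2" by linarith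
  qed
  have GZ: "G Z \<ge> 0" unfolding G_def Z_def using zz apos by (simp add: n_def)
  have A: "(if z + 1 < N then a * (?h (z+1) - ?h z) else 0)
         + (if z = N - 1 then c * (?h N - ?h z) else 0) \<le> a * (G (Z + 1) - G Z)"
  proof (cases "z + 1 < N")
    case True
    then have "z + 1 \<in> Lam N" by (auto simp: Lam_def)
    moreover have "z \<noteq> N - 1" using True by simp
    ultimately show ?thesis using True hin hz by (simp add: Z_def add.commute)
  next
    case False
    then have zN: "z = N - 1" using zz by simp
    then have Zn: "Z + 1 = n" unfolding Z_def n_def using zz by simp
    have aG: "a * G Z = (n - 1) / 2" unfolding G_def Zn[symmetric] using apos by (simp add: field_simps)
    have "c * (?h N - ?h z) = - (c * G Z) - c * D" using h0 hz by (simp add: algebra_simps)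
    also have "\<dots> \<le> - (a * G Z)" using Dc(1) aG GZ cpos by (smt (verit) mult_nonneg_nonneg)
    also have "\<dots> = a * (G (Z + 1) - G Z)" using Zn by (simp add: G_def)
    finally show ?thesis using False zN by simp
  qed
  have B: "(if z \<ge> 2 then a * (?h (z-1) - ?h z) else 0)
         + (if z = 1 then b * (?h 0 - ?h z) else 0) \<le> a * (G (Z - 1) - G Z)"
  proof (cases "z \<ge> 2")
    case True
    then have "z - 1 \<in> Lam N" using zz by (auto simp: Lam_def)
    moreover have "z \<noteq> 1" using True by simp
    ultimately show ?thesis using True hin hz by (simp add: Z_def of_nat_diff)
  next
    case False
    then have z1: "z = 1" using zz by simp
    then have Z1: "Z = 1" unfolding Z_def by simp
    have aG: "a * G Z = (n - 1) / 2" unfolding G_def using Z1 apos by (simp add: field_simps)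
    have "b * (?h 0 - ?h z) = - (b * G Z) - b * D" using h0 hz by (simp add: algebra_simps)
    also have "\<dots> \<le> - (a * G Z)" using Dc(2) aG GZ bpos by (smt (verit) mult_nonneg_nonneg)
    also have "\<dots> = a * (G (Z - 1) - G Z)" using Z1 by (simp add: G_def)
    finally show ?thesis using False z1 by simp
  qed
  have "(\<Sum>y\<in>Lamhat N. rt \<alpha> \<alpha>L \<alpha>R \<beta> N z y * (?h y - ?h z))
     = ((if z + 1 < N then a * (?h (z+1) - ?h z) else 0)
         + (if z = N - 1 then c * (?h N - ?h z) else 0))
      + ((if z \<ge> 2 then a * (?h (z-1) - ?h z) else 0)
         + (if z = 1 then b * (?h 0 - ?h z) else 0))"
    unfolding row_expand[OF pa pL pR z] a_def b_def c_def n_def by simp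
  also have "\<dots> \<le> a * (G (Z + 1) - G Z) + a * (G (Z - 1) - G Z)" using A B by linarith
  finally show ?thesis using key by linarith
qed

end

context
  fixes \<alpha> \<alpha>L \<alpha>R \<beta> :: real and N :: nat
  assumes pa: "\<alpha> > 0" and pL: "\<alpha>L > 0" and pR: "\<alpha>R > 0"
begin

lemma hh_nonneg: "hh \<alpha> \<alpha>L \<alpha>R \<beta> N x \<ge> 0"
proof (cases "x \<in> Lam N")
  case True
  then have x: "1 \<le> x" "x < N" by (auto simp: Lam_def)
  have "real x * (real N - real x) / (2 * (real N ^ 2 * \<alpha>)) \<ge> 0"
    using x pa by (intro divide_nonneg_pos mult_nonneg_nonneg) auto
  moreover have "(real N - 1) / 2 * (1 / (real N powr (2 - \<beta>) * \<alpha>L) + 1 / (real N powr (2 - \<beta>) * \<alpha>R)) \<ge> 0"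
    using x pL pR by (intro mult_nonneg_nonneg add_nonneg_nonneg) auto
  ultimately show ?thesis using True unfolding hh_def by simp
qed (simp add: hh_def)

lemma RR_ineq:
  assumes N2: "N \<ge> 2" and z: "z \<in> Lamhat N"
  shows "(\<Sum>y\<in>Lamhat N. RR \<alpha> \<alpha>L \<alpha>R \<beta> N z y * hh \<alpha> \<alpha>L \<alpha>R \<beta> N y)
      \<le> qq \<alpha> \<alpha>L \<alpha>R \<beta> N * hh \<alpha> \<alpha>L \<alpha>R \<beta> N z - (if z \<in> Lam N then 1 else 0)"
proof (cases "z \<in> Lam N")
  case True
  then show ?thesis using RR_h[OF pa pL pR z] gen_h[OF pa pL pR True] by simp
next
  case False
  then have zb: "z = 0 \<or> z = N" using z by (auto simp: Lam_def Lamhat_def)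
  have "rt \<alpha> \<alpha>L \<alpha>R \<beta> N z y = 0" for y
    using zb N2 unfolding rt_def[OF pa pL pR] rate_def Lam_def by auto
  then show ?thesis using RR_h[OF pa pL pR z] False by simp
qed

lemma tele:
  assumes x: "x \<in> Lam N"
  shows "(\<Sum>j<n. (\<Sum>y\<in>Lam N. Rpow \<alpha> \<alpha>L \<alpha>R \<beta> N j x y) / qq \<alpha> \<alpha>L \<alpha>R \<beta> N ^ Suc j) \<le> hh \<alpha> \<alpha>L \<alpha>R \<beta> N x"
proof -
  define q where "q = qq \<alpha> \<alpha>L \<alpha>R \<beta> N"
  define u where "u j = (\<Sum>y\<in>Lamhat N. Rpow \<alpha> \<alpha>L \<alpha>R \<beta> N j x y * hh \<alpha> \<alpha>L \<alpha>R \<beta> N y)" for j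
  define s where "s j = (\<Sum>y\<in>Lam N. Rpow \<alpha> \<alpha>L \<alpha>R \<beta> N j x y)" for j
  have fin: "finite (Lamhat N)" by (simp add: Lamhat_def)
  have sub: "Lam N \<subseteq> Lamhat N" by (auto simp: Lam_def Lamhat_def)
  have xh: "x \<in> Lamhat N" using x sub by auto
  have N2: "N \<ge> 2" using x by (auto simp: Lam_def)
  have qpos: "q > 0" unfolding q_def by (rule qq_pos[OF pa pL pR])
  have step: "s j \<le> q * u j - u (Suc j)" for j
  proof -
    have "u (Suc j) = (\<Sum>y\<in>Lamhat N. (\<Sum>z\<in>Lamhat N. Rpow \<alpha> \<alpha>L \<alpha>R \<beta> N j x z * RR \<alpha> \<alpha>L \<alpha>R \<beta> N z y) * hh \<alpha> \<alpha>L \<alpha>R \<beta> N y)"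
      unfolding u_def by (intro sum.cong refl) (simp add: Rpow_right[OF pa pL pR xh])
    also have "\<dots> = (\<Sum>z\<in>Lamhat N. Rpow \<alpha> \<alpha>L \<alpha>R \<beta> N j x z * (\<Sum>y\<in>Lamhat N. RR \<alpha> \<alpha>L \<alpha>R \<beta> N z y * hh \<alpha> \<alpha>L \<alpha>R \<beta> N y))"
      unfolding sum_distrib_left sum_distrib_right mult.assoc by (rule sum.swap)
    also have "\<dots> \<le> (\<Sum>z\<in>Lamhat N. Rpow \<alpha> \<alpha>L \<alpha>R \<beta> N j x z * (q * hh \<alpha> \<alpha>L \<alpha>R \<beta> N z - (if z \<in> Lam N then 1 else 0)))"
      unfolding q_def
      by (intro sum_mono mult_left_mono RR_ineq[OF N2] Rpow_nonneg[OF pa pL pR xh])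
    also have "\<dots> = q * u j - (\<Sum>z\<in>Lamhat N. if z \<in> Lam N then Rpow \<alpha> \<alpha>L \<alpha>R \<beta> N j x z else 0)"
    proof -
      have "(\<Sum>z\<in>Lamhat N. (if z \<in> Lam N then 1 else 0) * Rpow \<alpha> \<alpha>L \<alpha>R \<beta> N j x z)
          = (\<Sum>z\<in>Lamhat N. if z \<in> Lam N then Rpow \<alpha> \<alpha>L \<alpha>R \<beta> N j x z else 0)"
        by (intro sum.cong refl) simp
      then show ?thesis
        unfolding u_def by (simp add: algebra_simps sum_subtractf sum_distrib_left)
    qed
    also have "(\<Sum>z\<in>Lamhat N. if z \<in> Lam N then Rpow \<alpha> \<alpha>L \<alpha>R \<beta> N j x z else 0) = s j"
      unfolding s_def using fin sub by (simp add: sum.If_cases Int_absorb1[OF sub])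
    finally show ?thesis by simp
  qed
  have ts: "s j / q ^ Suc j \<le> u j / q ^ j - u (Suc j) / q ^ Suc j" for j
  proof -
    have "s j / q ^ Suc j \<le> (q * u j - u (Suc j)) / q ^ Suc j"
      using step[of j] qpos by (simp add: divide_right_mono)
    also have "\<dots> = u j / q ^ j - u (Suc j) / q ^ Suc j"
      using qpos by (simp add: field_simps)
    finally show ?thesis .
  qed
  have "(\<Sum>j<n. s j / q ^ Suc j) \<le> (\<Sum>j<n. u j / q ^ j - u (Suc j) / q ^ Suc j)"
    by (intro sum_mono ts)
  also have "\<dots> = u 0 / q ^ 0 - u n / q ^ n"
    by (rule sum_lessThan_telescope'[where f="\<lambda>j. u j / q ^ j"])
  also have "\<dots> \<le> u 0"
  proof -
    have "u n \<ge> 0" unfolding u_def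
      by (intro sum_nonneg mult_nonneg_nonneg Rpow_nonneg[OF pa pL pR xh] hh_nonneg)
    then show ?thesis using qpos by simp
  qed
  also have "u 0 = hh \<alpha> \<alpha>L \<alpha>R \<beta> N x"
  proof -
    have "u 0 = (\<Sum>y\<in>Lamhat N. if x = y then hh \<alpha> \<alpha>L \<alpha>R \<beta> N y else 0)"
      unfolding u_def by (intro sum.cong refl) (simp add: Rpow.simps[OF pa pL pR])
    then show ?thesis using fin xh by simp
  qed
  finally show ?thesis unfolding s_def q_def .
qed

end

context
  fixes \<alpha> \<alpha>L \<alpha>R \<beta> :: real and N :: nat
  assumes pa: "\<alpha> > 0" and pL: "\<alpha>L > 0" and pR: "\<alpha>R > 0"
begin

lemma hh_bound:
  assumes x: "x \<in> Lam N"
  shows "hh \<alpha> \<alpha>L \<alpha>R \<beta> N x \<le> (1/\<alpha> + 1/\<alpha>L + 1/\<alpha>R) * max 1 (real N powr (\<beta> - 1))"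
proof -
  define n where "n = real N"
  define M where "M = max 1 (n powr (\<beta> - 1))"
  define P where "P = n powr (2 - \<beta>)"
  have xx: "1 \<le> x" "x < N" using x by (auto simp: Lam_def)
  have n2: "n \<ge> 2" using xx unfolding n_def by linarith
  have Ppos: "P > 0" unfolding P_def using n2 by simp
  have nP: "n / P = n powr (\<beta> - 1)"
  proof -
    have "n powr (\<beta> - 1) * P = n powr 1" unfolding P_def by (simp add: powr_add[symmetric])
    then show ?thesis using Ppos n2 by (simp add: field_simps)
  qed
  have G: "real x * (n - real x) / (2 * (n ^ 2 * \<alpha>)) \<le> 1 / \<alpha> * M"
  proof -
    have "real x * (n - real x) \<le> n * n"
      using xx n2 unfolding n_def by (intro mult_mono) auto
    then have "real x * (n - real x) / (2 * (n ^ 2 * \<alpha>)) \<le> n * n / (2 * (n ^ 2 * \<alpha>))"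
      using pa n2 by (intro divide_right_mono) auto
    also have "\<dots> = 1 / (2 * \<alpha>)" using n2 pa by (simp add: power2_eq_square field_simps)
    also have "\<dots> \<le> 1 / \<alpha> * 1" using pa by (simp add: field_simps)
    also have "\<dots> \<le> 1 / \<alpha> * M" unfolding M_def using pa by (intro mult_left_mono) auto
    finally show ?thesis .
  qed
  have D: "(n - 1) / 2 * (1 / (P * \<alpha>L) + 1 / (P * \<alpha>R)) \<le> (1/\<alpha>L + 1/\<alpha>R) * M"
  proof -
    have "(n - 1) / 2 * (1 / (P * \<alpha>L) + 1 / (P * \<alpha>R)) = (n - 1) / P / 2 * (1/\<alpha>L + 1/\<alpha>R)"
      using Ppos pL pR by (simp add: field_simps)
    also have "\<dots> \<le> n / P * (1/\<alpha>L + 1/\<alpha>R)"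
      using Ppos pL pR n2 by (intro mult_right_mono) (auto simp: field_simps)
    also have "\<dots> \<le> M * (1/\<alpha>L + 1/\<alpha>R)"
      unfolding nP M_def using pL pR by (intro mult_right_mono) auto
    finally show ?thesis by (simp add: mult.commute)
  qed
  have "hh \<alpha> \<alpha>L \<alpha>R \<beta> N x = real x * (n - real x) / (2 * (n ^ 2 * \<alpha>)) + (n - 1) / 2 * (1 / (P * \<alpha>L) + 1 / (P * \<alpha>R))"
    using x unfolding hh_def n_def P_def by simp
  also have "\<dots> \<le> 1 / \<alpha> * M + (1/\<alpha>L + 1/\<alpha>R) * M" using G D by linarith
  finally show ?thesis unfolding M_def n_def by (simp add: algebra_simps)
qed

end

context
  fixes \<alpha> \<alpha>L \<alpha>R \<beta> :: real and N :: nat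
  assumes pa: "\<alpha> > 0" and pL: "\<alpha>L > 0" and pR: "\<alpha>R > 0"
begin

lemma integral_bound:
  assumes x: "x \<in> Lam N"
  shows "(\<integral>\<^sup>+ t. ennreal (indicator {0..} t * surv_prob \<alpha> \<alpha>L \<alpha>R \<beta> N x t) \<partial>lborel)
         \<le> ennreal (hh \<alpha> \<alpha>L \<alpha>R \<beta> N x)"
proof -
  define q where "q = qq \<alpha> \<alpha>L \<alpha>R \<beta> N"
  define s where "s j = (\<Sum>y\<in>Lam N. Rpow \<alpha> \<alpha>L \<alpha>R \<beta> N j x y)" for j
  define f where "f j t = indicator {0..} t * (exp (- q * t) * (t ^ j / fact j * s j))" for j and t :: real
  have sub: "Lam N \<subseteq> Lamhat N" by (auto simp: Lam_def Lamhat_def)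
  have xh: "x \<in> Lamhat N" using x sub by auto
  have finL: "finite (Lam N)" by (simp add: Lam_def)
  have qpos: "q > 0" unfolding q_def by (rule qq_pos[OF pa pL pR])
  have s0: "s j \<ge> 0" for j unfolding s_def by (intro sum_nonneg Rpow_nonneg[OF pa pL pR xh])
  have f0: "f j t \<ge> 0" for j t
    unfolding f_def using s0[of j] by (auto simp: indicator_def)
  have fs: "(\<lambda>j. f j t) sums (indicator {0..} t * surv_prob \<alpha> \<alpha>L \<alpha>R \<beta> N x t)" for t
  proof (cases "t \<ge> 0")
    case False
    then show ?thesis by (simp add: f_def)
  next
    case True
    have sy: "summable (\<lambda>j. t ^ j / fact j * Rpow \<alpha> \<alpha>L \<alpha>R \<beta> N j x y)" for y
      by (rule summable_norm_cancel[OF summable_Rser[OF pa pL pR xh]])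
    have "surv_prob \<alpha> \<alpha>L \<alpha>R \<beta> N x t = (\<Sum>y\<in>Lam N. exp (- q * t) * (\<Sum>j. t ^ j / fact j * Rpow \<alpha> \<alpha>L \<alpha>R \<beta> N j x y))"
      unfolding surv_prob_def q_def by (intro sum.cong refl trans_prob_eq[OF pa pL pR xh])
    also have "\<dots> = exp (- q * t) * (\<Sum>y\<in>Lam N. \<Sum>j. t ^ j / fact j * Rpow \<alpha> \<alpha>L \<alpha>R \<beta> N j x y)"
      by (simp add: sum_distrib_left)
    also have "\<dots> = exp (- q * t) * (\<Sum>j. \<Sum>y\<in>Lam N. t ^ j / fact j * Rpow \<alpha> \<alpha>L \<alpha>R \<beta> N j x y)"
      by (subst suminf_sum[OF sy]) rule
    also have "\<dots> = exp (- q * t) * (\<Sum>j. t ^ j / fact j * s j)"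
      unfolding s_def by (simp add: sum_distrib_left)
    finally have e: "surv_prob \<alpha> \<alpha>L \<alpha>R \<beta> N x t = exp (- q * t) * (\<Sum>j. t ^ j / fact j * s j)" .
    have "(\<lambda>j. t ^ j / fact j * s j) = (\<lambda>j. \<Sum>y\<in>Lam N. t ^ j / fact j * Rpow \<alpha> \<alpha>L \<alpha>R \<beta> N j x y)"
      by (simp add: s_def sum_distrib_left)
    then have sm: "summable (\<lambda>j. t ^ j / fact j * s j)"
      using summable_sum[of "Lam N" "\<lambda>y j. t ^ j / fact j * Rpow \<alpha> \<alpha>L \<alpha>R \<beta> N j x y", OF sy] by simp
    have "(\<lambda>j. exp (- q * t) * (t ^ j / fact j * s j)) sums (exp (- q * t) * (\<Sum>j. t ^ j / fact j * s j))"
      by (intro sums_mult summable_sums sm)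
    then show ?thesis using True e by (simp add: f_def)
  qed
  have meas: "(\<lambda>t. ennreal (f j t)) \<in> borel_measurable lborel" for j
    unfolding f_def by measurable
  have w0': "s j / q ^ Suc j \<ge> 0" for j using s0[of j] qpos by simp
  have intj: "(\<integral>\<^sup>+ t. ennreal (f j t) \<partial>lborel) = ennreal (s j / q ^ Suc j)" for j
  proof -
    have "(\<integral>\<^sup>+ t. ennreal (f j t) \<partial>lborel) = (\<integral>\<^sup>+ t. ennreal (erlang_density j q t) * ennreal (s j / q ^ Suc j) \<partial>lborel)"
    proof (intro nn_integral_cong)
      fix t :: real
      have "f j t = erlang_density j q t * (s j / q ^ Suc j)"
        unfolding f_def erlang_density_def using qpos by (auto simp: indicator_def field_simps)
      then show "ennreal (f j t) = ennreal (erlang_density j q t) * ennreal (s j / q ^ Suc j)"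
        using s0[of j] qpos by (simp only: ennreal_mult''[symmetric] w0' times_divide_eq_right)
    qed
    also have "\<dots> = (\<integral>\<^sup>+ t. ennreal (erlang_density j q t) \<partial>lborel) * ennreal (s j / q ^ Suc j)"
      by (rule nn_integral_multc) measurable
    also have "(\<integral>\<^sup>+ t. ennreal (erlang_density j q t) \<partial>lborel) = 1"
      using nn_integral_erlang_ith_moment[OF qpos, of j 0] by simp
    finally show ?thesis by simp
  qed
  have w0: "s j / q ^ Suc j \<ge> 0" for j using s0[of j] qpos by simp
  have pb: "(\<Sum>j<n. s j / q ^ Suc j) \<le> hh \<alpha> \<alpha>L \<alpha>R \<beta> N x" for n
    unfolding s_def q_def by (rule tele[OF pa pL pR x])
  have sw: "summable (\<lambda>j. s j / q ^ Suc j)"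
    by (rule summableI_nonneg_bounded[OF w0 pb])
  have "(\<integral>\<^sup>+ t. ennreal (indicator {0..} t * surv_prob \<alpha> \<alpha>L \<alpha>R \<beta> N x t) \<partial>lborel)
      = (\<integral>\<^sup>+ t. (\<Sum>j. ennreal (f j t)) \<partial>lborel)"
    by (intro nn_integral_cong) (simp add: suminf_ennreal_eq[OF f0 fs])
  also have "\<dots> = (\<Sum>j. \<integral>\<^sup>+ t. ennreal (f j t) \<partial>lborel)"
    by (rule nn_integral_suminf[OF meas])
  also have "\<dots> = (\<Sum>j. ennreal (s j / q ^ Suc j))" by (simp add: intj)
  also have "\<dots> = ennreal (\<Sum>j. s j / q ^ Suc j)"
    by (rule suminf_ennreal_eq[OF w0 summable_sums[OF sw]])
  also have "\<dots> \<le> ennreal (hh \<alpha> \<alpha>L \<alpha>R \<beta> N x)"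
    by (intro ennreal_leI suminf_le_const[OF sw pb])
  finally show ?thesis .
qed

end

theorem lemmaB1:
  fixes \<alpha> \<alpha>L \<alpha>R :: real
  assumes "\<alpha> > 0" and "\<alpha>L > 0" and "\<alpha>R > 0"
  shows "\<exists>C>0. \<forall>(\<beta>::real) (N::nat). \<forall>x\<in>Lam N.
           (\<integral>\<^sup>+ t. ennreal (indicator {0..} t * surv_prob \<alpha> \<alpha>L \<alpha>R \<beta> N x t) \<partial>lborel)
             \<le> ennreal (C * max 1 (real N powr (\<beta> - 1)))"
proof (intro exI[of _ "1/\<alpha> + 1/\<alpha>L + 1/\<alpha>R"] conjI allI ballI)
  show "0 < 1/\<alpha> + 1/\<alpha>L + 1/\<alpha>R" using assms by (intro add_pos_pos) auto
  fix \<beta> :: real and N :: nat and x assume x: "x \<in> Lam N"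
  show "(\<integral>\<^sup>+ t. ennreal (indicator {0..} t * surv_prob \<alpha> \<alpha>L \<alpha>R \<beta> N x t) \<partial>lborel)
             \<le> ennreal ((1/\<alpha> + 1/\<alpha>L + 1/\<alpha>R) * max 1 (real N powr (\<beta> - 1)))"
    using integral_bound[OF assms x] ennreal_leI[OF hh_bound[OF assms x, of \<beta>]] by (rule order.trans)
qed

end
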